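(* Let $\mathscr{G}$ be a principal homogeneous groupoid with vertex set $\Lambda$ (exactly one arrow $[a,b]$ from $a$ to $b$ for all $a,b\in\Lambda$), endowed with a pre-braiding $\sigma$, and let $\langle\cdot,\cdot,\cdot\rangle$ be the ternary operation on $\Lambda$ defined by $\sigma([a,b]|[b,c])=[a,\langle a,b,c\rangle]|[\langle a,b,c\rangle,c]$. Then: (i) for all $a,b$, the map $\langle a,b,\cdot\rangle\colon\Lambda\to\Lambda$ is invertible with inverse $\langle b,a,\cdot\rangle$; (ii) for all $b,c$, the map $\langle\cdot,b,c\rangle$ is invertible with inverse $\langle\cdot,c,b\rangle$; (iii) if moreover $\sigma$ is involutive, then $\langle\cdot,b,c\rangle$ also has inverse $\langle b,c,\cdot\rangle$, and hence $\langle c,b,\cdot\rangle=\langle\cdot,b,c\rangle$.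
   Context: For a groupoid $\mathscr{G}$ with vertices $\Lambda$, multiplication $m$ on composable pairs and units $\mathbf{1}_\lambda$, a pre-braiding is a source/target-preserving map $\sigma(x,y)=(x\rightharpoonup y,x\leftharpoonup y)$ on composable pairs such that for all composable $x|y|z$: $\sigma(x,\mathbf{1}_{\mathfrak{t}(x)})=(\mathbf{1}_{\mathfrak{s}(x)},x)$; $\sigma(\mathbf{1}_{\mathfrak{s}(x)},x)=(x,\mathbf{1}_{\mathfrak{t}(x)})$; $x\rightharpoonup yz=(x\rightharpoonup y)((x\leftharpoonup y)\rightharpoonup z)$ and $x\leftharpoonup yz=(x\leftharpoonup y)\leftharpoonup z$; $xy\leftharpoonup z=(x\leftharpoonup(y\rightharpoonup z))(y\leftharpoonup z)$ and $xy\rightharpoonup z=x\rightharpoonup(y\rightharpoonup z)$; $m\circ\sigma=m$. Involutive means $\sigma^2=\mathrm{id}$. In a PH groupoid, $[a,b][b,c]=[a,c]$. *)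

theory Defs
  imports Main
begin

text \<open>The principal homogeneous (PH) groupoid on a vertex set L: the arrows are
  the pairs (a,b) with a,b in L, the arrow [a,b] = (a,b) goes from source a to
  target b, units are (a,a), and (a,b)|(b,c) is composable with product (a,c).\<close>

type_synonym 'a arr = "'a \<times> 'a"
type_synonym 'a braid = "'a arr \<Rightarrow> 'a arr \<Rightarrow> 'a arr \<times> 'a arr"

definition ph_arr :: "'a set \<Rightarrow> 'a arr set" where
  "ph_arr L = L \<times> L"

definition src :: "'a arr \<Rightarrow> 'a" where "src x = fst x"
definition tgt :: "'a arr \<Rightarrow> 'a" where "tgt x = snd x"

definition ph_unit :: "'a \<Rightarrow> 'a arr" where "ph_unit a = (a, a)"

definition ph_mult :: "'a arr \<Rightarrow> 'a arr \<Rightarrow> 'a arr" where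
  "ph_mult x y = (src x, tgt y)"

definition composable :: "'a set \<Rightarrow> 'a arr \<Rightarrow> 'a arr \<Rightarrow> bool" where
  "composable L x y \<longleftrightarrow> x \<in> ph_arr L \<and> y \<in> ph_arr L \<and> tgt x = src y"

definition lharp :: "'a braid \<Rightarrow> 'a arr \<Rightarrow> 'a arr \<Rightarrow> 'a arr" where
  "lharp \<sigma> x y = fst (\<sigma> x y)"

definition rharp :: "'a braid \<Rightarrow> 'a arr \<Rightarrow> 'a arr \<Rightarrow> 'a arr" where
  "rharp \<sigma> x y = snd (\<sigma> x y)"

definition pre_braiding :: "'a set \<Rightarrow> 'a braid \<Rightarrow> bool" where
  "pre_braiding L \<sigma> \<longleftrightarrow>
    \<comment> \<open>sigma maps composable pairs to composable pairs, preserving source and target\<close>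
    (\<forall>x y. composable L x y \<longrightarrow>
        composable L (lharp \<sigma> x y) (rharp \<sigma> x y) \<and>
        src (lharp \<sigma> x y) = src x \<and> tgt (rharp \<sigma> x y) = tgt y) \<and>
    \<comment> \<open>unit axioms\<close>
    (\<forall>x \<in> ph_arr L. \<sigma> x (ph_unit (tgt x)) = (ph_unit (src x), x)) \<and>
    (\<forall>x \<in> ph_arr L. \<sigma> (ph_unit (src x)) x = (x, ph_unit (tgt x))) \<and>
    \<comment> \<open>compatibility with multiplication, for composable x|y|z\<close>
    (\<forall>x y z. composable L x y \<and> composable L y z \<longrightarrow>
        lharp \<sigma> x (ph_mult y z) = ph_mult (lharp \<sigma> x y) (lharp \<sigma> (rharp \<sigma> x y) z) \<and>
        rharp \<sigma> x (ph_mult y z) = rharp \<sigma> (rharp \<sigma> x y) z \<and>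
        rharp \<sigma> (ph_mult x y) z = ph_mult (rharp \<sigma> x (lharp \<sigma> y z)) (rharp \<sigma> y z) \<and>
        lharp \<sigma> (ph_mult x y) z = lharp \<sigma> x (lharp \<sigma> y z)) \<and>
    \<comment> \<open>m \<circ> sigma = m\<close>
    (\<forall>x y. composable L x y \<longrightarrow> ph_mult (lharp \<sigma> x y) (rharp \<sigma> x y) = ph_mult x y)"

definition involutive_braiding :: "'a set \<Rightarrow> 'a braid \<Rightarrow> bool" where
  "involutive_braiding L \<sigma> \<longleftrightarrow>
    (\<forall>x y. composable L x y \<longrightarrow> case_prod \<sigma> (\<sigma> x y) = (x, y))"

definition tern :: "'a braid \<Rightarrow> 'a \<Rightarrow> 'a \<Rightarrow> 'a \<Rightarrow> 'a" where
  "tern \<sigma> a b c = tgt (lharp \<sigma> (a, b) (b, c))"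

end

theory Submission
  imports Defs
begin

lemma shapes:
  assumes pb: "pre_braiding L \<sigma>" and "a \<in> L" "b \<in> L" "c \<in> L"
  shows "lharp \<sigma> (a,b) (b,c) = (a, tern \<sigma> a b c)"
    "rharp \<sigma> (a,b) (b,c) = (tern \<sigma> a b c, c)"
    "tern \<sigma> a b c \<in> L"
proof -
  have cp: "composable L (a,b) (b,c)" using assms by (simp add: composable_def ph_arr_def src_def tgt_def)
  have h: "composable L (lharp \<sigma> (a,b) (b,c)) (rharp \<sigma> (a,b) (b,c)) \<and>
        src (lharp \<sigma> (a,b) (b,c)) = src (a,b) \<and> tgt (rharp \<sigma> (a,b) (b,c)) = tgt (b,c)"
    using pb cp unfolding pre_braiding_def by blast
  show "lharp \<sigma> (a,b) (b,c) = (a, tern \<sigma> a b c)"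
    using h by (simp add: tern_def src_def tgt_def prod_eq_iff)
  show "rharp \<sigma> (a,b) (b,c) = (tern \<sigma> a b c, c)"
    using h by (simp add: tern_def src_def tgt_def prod_eq_iff composable_def)
  show "tern \<sigma> a b c \<in> L"
    using h by (auto simp: tern_def composable_def ph_arr_def tgt_def)
qed

lemma unit1:
  assumes pb: "pre_braiding L \<sigma>" and "a \<in> L" "b \<in> L"
  shows "tern \<sigma> a b b = a"
proof -
  have "\<sigma> (a,b) (ph_unit (tgt (a,b))) = (ph_unit (src (a,b)), (a,b))"
    using pb assms unfolding pre_braiding_def by (simp add: ph_arr_def)
  then show ?thesis by (simp add: tern_def lharp_def ph_unit_def src_def tgt_def)
qed

lemma comp_ax:
  assumes pb: "pre_braiding L \<sigma>" and "a \<in> L" "b \<in> L" "c \<in> L" "d \<in> L"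
  shows "tern \<sigma> a b d = tern \<sigma> (tern \<sigma> a b c) c d"
    "tern \<sigma> (tern \<sigma> a b c) c d = tern \<sigma> a b d"
    "tern \<sigma> a c d = tern \<sigma> a b (tern \<sigma> b c d)"
proof -
  have cp: "composable L (a,b) (b,c) \<and> composable L (b,c) (c,d)" using assms by (simp add: composable_def ph_arr_def src_def tgt_def)
  then have h: "lharp \<sigma> (a,b) (ph_mult (b,c) (c,d)) = ph_mult (lharp \<sigma> (a,b) (b,c)) (lharp \<sigma> (rharp \<sigma> (a,b) (b,c)) (c,d)) \<and>
        rharp \<sigma> (a,b) (ph_mult (b,c) (c,d)) = rharp \<sigma> (rharp \<sigma> (a,b) (b,c)) (c,d) \<and>
        rharp \<sigma> (ph_mult (a,b) (b,c)) (c,d) = ph_mult (rharp \<sigma> (a,b) (lharp \<sigma> (b,c) (c,d))) (rharp \<sigma> (b,c) (c,d)) \<and>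
        lharp \<sigma> (ph_mult (a,b) (b,c)) (c,d) = lharp \<sigma> (a,b) (lharp \<sigma> (b,c) (c,d))"
    using pb unfolding pre_braiding_def by blast
  have t1: "tern \<sigma> a b c \<in> L" "tern \<sigma> b c d \<in> L" using shapes[OF pb] assms by auto
  have m: "ph_mult (b,c) (c,d) = (b,d)" "ph_mult (a,b) (b,c) = (a,c)" by (simp_all add: ph_mult_def src_def tgt_def)
  from h show "tern \<sigma> a b d = tern \<sigma> (tern \<sigma> a b c) c d"
    using assms t1 by (simp add: m shapes[OF pb] ph_mult_def src_def tgt_def)
  then show "tern \<sigma> (tern \<sigma> a b c) c d = tern \<sigma> a b d" by simp
  from h show "tern \<sigma> a c d = tern \<sigma> a b (tern \<sigma> b c d)"
    using assms t1 by (simp add: m shapes[OF pb] ph_mult_def src_def tgt_def)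
qed

lemma inv_i:
  assumes pb: "pre_braiding L \<sigma>" and "a \<in> L" "b \<in> L" "x \<in> L"
  shows "tern \<sigma> a b (tern \<sigma> b a x) = x"
proof -
  have "tern \<sigma> a a x = tern \<sigma> a b (tern \<sigma> b a x)" using comp_ax(3)[OF pb] assms by blast
  moreover have "tern \<sigma> a a x = x"
  proof -
    have "\<sigma> (ph_unit (src (a,x))) (a,x) = ((a,x), ph_unit (tgt (a,x)))"
      using pb assms unfolding pre_braiding_def by (simp add: ph_arr_def)
    then show ?thesis by (simp add: tern_def lharp_def ph_unit_def src_def tgt_def)
  qed
  ultimately show ?thesis by simp
qed

lemma inv_ii:
  assumes pb: "pre_braiding L \<sigma>" and "b \<in> L" "c \<in> L" "x \<in> L"
  shows "tern \<sigma> (tern \<sigma> x b c) c b = x"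
  using comp_ax(2)[OF pb assms(4,2,3,2)] unit1[OF pb assms(4,2)] by simp

lemma swap:
  assumes pb: "pre_braiding L \<sigma>" and inv: "involutive_braiding L \<sigma>"
    and "b \<in> L" "c \<in> L" "y \<in> L"
  shows "tern \<sigma> b c y = tern \<sigma> y c b"
proof -
  define s where "s = tern \<sigma> b c y"
  have sL: "s \<in> L" using shapes[OF pb] assms s_def by auto
  have cp: "composable L (b,c) (c,y)" using assms by (simp add: composable_def ph_arr_def src_def tgt_def)
  have "case_prod \<sigma> (\<sigma> (b,c) (c,y)) = ((b,c),(c,y))" using inv cp unfolding involutive_braiding_def by blast
  moreover have "\<sigma> (b,c) (c,y) = ((b,s),(s,y))"
    using shapes[OF pb assms(3,4,5)] s_def by (metis lharp_def rharp_def prod.collapse)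
  ultimately have "\<sigma> (b,s) (s,y) = ((b,c),(c,y))" by simp
  then have inv1: "tern \<sigma> b s y = c" by (simp add: tern_def lharp_def tgt_def)
  have "tern \<sigma> b s s = tern \<sigma> (tern \<sigma> b s y) y s" using comp_ax(1)[OF pb assms(3) sL assms(5) sL] .
  then have "tern \<sigma> c y s = b" using unit1[OF pb assms(3) sL] inv1 by simp
  then have "tern \<sigma> y c (tern \<sigma> c y s) = tern \<sigma> y c b" by simp
  then show ?thesis using inv_i[OF pb assms(5,4) sL] s_def by simp
qed

theorem lemma7p11:
  fixes L :: "'a set" and \<sigma> :: "'a braid"
  assumes pb: "pre_braiding L \<sigma>"
  shows "(\<forall>a\<in>L. \<forall>b\<in>L. \<forall>x\<in>L.
            tern \<sigma> a b x \<in> L \<and> tern \<sigma> b a (tern \<sigma> a b x) = x \<and> tern \<sigma> a b (tern \<sigma> b a x) = x)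
       \<and> (\<forall>b\<in>L. \<forall>c\<in>L. \<forall>x\<in>L.
            tern \<sigma> x b c \<in> L \<and> tern \<sigma> (tern \<sigma> x b c) c b = x \<and> tern \<sigma> (tern \<sigma> x c b) b c = x)
       \<and> (involutive_braiding L \<sigma> \<longrightarrow>
            (\<forall>b\<in>L. \<forall>c\<in>L. \<forall>x\<in>L.
               tern \<sigma> b c (tern \<sigma> x b c) = x \<and> tern \<sigma> (tern \<sigma> b c x) b c = x
               \<and> tern \<sigma> c b x = tern \<sigma> x b c))"
proof (intro conjI impI ballI)
  fix a b x assume "a \<in> L" "b \<in> L" "x \<in> L"
  then show "tern \<sigma> a b x \<in> L" "tern \<sigma> b a (tern \<sigma> a b x) = x" "tern \<sigma> a b (tern \<sigma> b a x) = x"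
    using shapes[OF pb] inv_i[OF pb] by auto
next
  fix b c x assume "b \<in> L" "c \<in> L" "x \<in> L"
  then show "tern \<sigma> x b c \<in> L" "tern \<sigma> (tern \<sigma> x b c) c b = x" "tern \<sigma> (tern \<sigma> x c b) b c = x"
    using shapes[OF pb] inv_ii[OF pb] by auto
next
  fix b c x assume iv: "involutive_braiding L \<sigma>" and h: "b \<in> L" "c \<in> L" "x \<in> L"
  show sw: "tern \<sigma> c b x = tern \<sigma> x b c" using swap[OF pb iv h(2,1,3)] .
  show "tern \<sigma> b c (tern \<sigma> x b c) = x" using sw inv_i[OF pb h(1,2,3)] by simp
  show "tern \<sigma> (tern \<sigma> b c x) b c = x"
    using swap[OF pb iv h(1,2,3)] inv_i[OF pb h(2,1,3)] shapes(3)[OF pb h(2,1,3)]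
      swap[OF pb iv h(2,1)] shapes(3)[OF pb h(1,2,3)] by metis
qed

end
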